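(* Let $N\ge 3$, $m>0$, and let $\phi$ be a positive solution of $$\phi_{\xi\xi}+\Big(\frac{N+1}{\xi}-\frac{\xi}{2}\Big)\phi_\xi-\phi+\phi(\xi\phi_\xi+N\phi)=0$$ on some interval $(l,\infty)$, $l>0$, with $\phi(\xi)\xi^2\to m$ as $\xi\to\infty$. Let $\ell:=\inf\{l>0:\ \phi\text{ can be defined (as a solution) in }(l,\infty)\}$. Then precisely one of the following holds: (1) $\phi$ is unbounded and $\phi(\xi)\to\infty$ as $\xi\to\ell^+$; (2) $\phi$ is bounded, $\ell>0$ and $\lim_{\xi\to\ell^+}\phi(\xi)=0$; (3) $\phi$ is bounded, $\ell=0$, $\lim_{\xi\to 0^+}\phi(\xi)$ exists and $\phi'(\xi)\to 0$ as $\xi\to 0^+$. *)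

theory Defs
  imports "HOL-Analysis.Analysis"
begin

definition pos_sol :: "nat \<Rightarrow> (real \<Rightarrow> real) \<Rightarrow> real \<Rightarrow> bool" where
  "pos_sol N \<psi> l \<longleftrightarrow>
     (\<forall>\<xi>>l. \<psi> differentiable (at \<xi>) \<and> deriv \<psi> differentiable (at \<xi>) \<and> \<psi> \<xi> > 0 \<and>
        deriv (deriv \<psi>) \<xi> + ((real N + 1) / \<xi> - \<xi> / 2) * deriv \<psi> \<xi> - \<psi> \<xi>
          + \<psi> \<xi> * (\<xi> * deriv \<psi> \<xi> + real N * \<psi> \<xi>) = 0)"

definition ext_inf :: "nat \<Rightarrow> (real \<Rightarrow> real) \<Rightarrow> real \<Rightarrow> real" where
  "ext_inf N \<phi> l0 = Inf {l. l > 0 \<and> (\<exists>\<psi>. pos_sol N \<psi> l \<and> (\<forall>\<xi>>max l l0. \<psi> \<xi> = \<phi> \<xi>))}"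

end

theory Submission
  imports Defs
begin
definition fN :: "nat \<Rightarrow> real \<Rightarrow> real \<Rightarrow> real \<Rightarrow> real" where
  "fN N x y q = -((real N + 1)/x - x/2)*q + y - y*(x*q + real N*y)"

definition sys :: "nat \<Rightarrow> (real \<Rightarrow> real) \<Rightarrow> (real \<Rightarrow> real) \<Rightarrow> real \<Rightarrow> bool" where
  "sys N y p x \<longleftrightarrow> (y has_real_derivative p x) (at x) \<and> (p has_real_derivative fN N x (y x) (p x)) (at x)"

definition solat :: "nat \<Rightarrow> (real \<Rightarrow> real) \<Rightarrow> real \<Rightarrow> bool" where
  "solat N \<psi> \<xi> \<longleftrightarrow> \<psi> differentiable (at \<xi>) \<and> deriv \<psi> differentiable (at \<xi>) \<and> \<psi> \<xi> > 0 \<and>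
        deriv (deriv \<psi>) \<xi> + ((real N + 1) / \<xi> - \<xi> / 2) * deriv \<psi> \<xi> - \<psi> \<xi>
          + \<psi> \<xi> * (\<xi> * deriv \<psi> \<xi> + real N * \<psi> \<xi>) = 0"

lemma pos_sol_iff: "pos_sol N \<psi> l \<longleftrightarrow> (\<forall>\<xi>>l. solat N \<psi> \<xi>)"
  unfolding pos_sol_def solat_def by blast

lemma solat_sys: assumes "solat N \<psi> \<xi>" shows "sys N \<psi> (deriv \<psi>) \<xi>" "\<psi> \<xi> > 0"
proof -
  have 1: "(\<psi> has_real_derivative deriv \<psi> \<xi>) (at \<xi>)"
    using assms unfolding solat_def using DERIV_deriv_iff_real_differentiable by blast
  have 2: "(deriv \<psi> has_real_derivative deriv (deriv \<psi>) \<xi>) (at \<xi>)"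
    using assms unfolding solat_def using DERIV_deriv_iff_real_differentiable by blast
  have "deriv (deriv \<psi>) \<xi> = fN N \<xi> (\<psi> \<xi>) (deriv \<psi> \<xi>)"
    using assms unfolding solat_def fN_def by (simp add: algebra_simps)
  then show "sys N \<psi> (deriv \<psi>) \<xi>" using 1 2 unfolding sys_def by simp
  show "\<psi> \<xi> > 0" using assms unfolding solat_def by blast
qed

lemma sys_solat:
  assumes "\<And>x. x \<in> S \<Longrightarrow> sys N y p x" "open S" "\<xi> \<in> S" "y \<xi> > 0"
  shows "solat N y \<xi>"
proof -
  have dy: "\<And>x. x \<in> S \<Longrightarrow> deriv y x = p x"
    using assms(1) unfolding sys_def by (simp add: DERIV_imp_deriv)
  have "(deriv y has_real_derivative fN N \<xi> (y \<xi>) (p \<xi>)) (at \<xi>)"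
    apply (rule has_field_derivative_transform_within_open[of p _ _ S])
    using assms dy unfolding sys_def by auto
  then have "deriv (deriv y) \<xi> = fN N \<xi> (y \<xi>) (p \<xi>)" "deriv y differentiable (at \<xi>)"
    by (auto simp: DERIV_imp_deriv real_differentiable_def)
  moreover have "y differentiable (at \<xi>)"
    using assms unfolding sys_def real_differentiable_def by blast
  ultimately show ?thesis unfolding solat_def using dy[OF assms(3)] assms(4)
    by (simp add: fN_def algebra_simps)
qed

lemma sys_transfer:
  assumes "sys N y p x" "open S" "x \<in> S" "\<And>z. z \<in> S \<Longrightarrow> y z = g z"
  shows "sys N g p x"
  using assms unfolding sys_def
  by (metis has_field_derivative_transform_within_open)

lemma ineq1:
  fixes a b k1 k2 K0 :: real
  assumes "\<bar>k1\<bar> \<le> K0" "\<bar>k2\<bar> \<le> K0"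
  shows "\<bar>2*a*b + 2*b*(k1*b + k2*a)\<bar> \<le> (1+3*K0)*(a\<^sup>2+b\<^sup>2)"
proof -
  have h1: "\<bar>2*a*b\<bar> \<le> a\<^sup>2+b\<^sup>2"
  proof -
    have "0 \<le> (\<bar>a\<bar> - \<bar>b\<bar>)\<^sup>2" by simp
    then show ?thesis by (simp add: power2_eq_square abs_mult algebra_simps)
  qed
  have h2: "\<bar>2*b*(k1*b)\<bar> \<le> 2*K0*(a\<^sup>2+b\<^sup>2)"
  proof -
    have "\<bar>2*b*(k1*b)\<bar> = 2*\<bar>k1\<bar>*b\<^sup>2" by (simp add: abs_mult power2_eq_square)
    also have "\<dots> \<le> 2*K0*b\<^sup>2" using assms by (simp add: mult_right_mono)
    also have "\<dots> \<le> 2*K0*(a\<^sup>2+b\<^sup>2)" using assms by (simp add: mult_left_mono)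
    finally show ?thesis .
  qed
  have h3: "\<bar>2*b*(k2*a)\<bar> \<le> K0*(a\<^sup>2+b\<^sup>2)"
  proof -
    have "\<bar>2*b*(k2*a)\<bar> = \<bar>k2\<bar>*\<bar>2*a*b\<bar>" by (simp add: abs_mult)
    also have "\<dots> \<le> K0*(a\<^sup>2+b\<^sup>2)" using h1 assms by (simp add: mult_mono)
    finally show ?thesis .
  qed
  show ?thesis using h1 h2 h3 by (simp add: algebra_simps)
qed

lemma bounded_cont_Icc:
  fixes k :: "real \<Rightarrow> real"
  assumes "continuous_on {c..d} k"
  obtains K where "\<And>x. x \<in> {c..d} \<Longrightarrow> \<bar>k x\<bar> \<le> K"
proof -
  have "bounded (k ` {c..d})" by (intro compact_imp_bounded compact_continuous_image assms compact_Icc)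
  then obtain K where "\<forall>z\<in>k ` {c..d}. norm z \<le> K" using bounded_iff by blast
  then show ?thesis by (intro that[of K]) auto
qed

lemma deriv_cont_on:
  assumes "\<And>x. x \<in> S \<Longrightarrow> (f has_real_derivative g x) (at x)"
  shows "continuous_on S f"
  using assms by (meson DERIV_isCont continuous_at_imp_continuous_on)

lemma fN_diff: "x \<noteq> 0 \<Longrightarrow> fN N x ya pa - fN N x yb pb =
   (-((real N + 1)/x - x/2) - x*ya) * (pa - pb) + (1 - x*pb - real N*(ya+yb)) * (ya - yb)"
  unfolding fN_def by (simp add: field_simps)

lemma uniq_cpt:
  fixes ya pa yb pb :: "real \<Rightarrow> real"
  assumes c: "0 < c"
    and s1: "\<And>x. x \<in> {c..d} \<Longrightarrow> sys N ya pa x"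
    and s2: "\<And>x. x \<in> {c..d} \<Longrightarrow> sys N yb pb x"
    and t: "t \<in> {c..d}" "ya t = yb t" "pa t = pb t"
    and x: "x \<in> {c..d}"
  shows "ya x = yb x \<and> pa x = pb x"
proof -
  have cy1: "continuous_on {c..d} ya" "continuous_on {c..d} pa"
    "continuous_on {c..d} yb" "continuous_on {c..d} pb"
    by (rule deriv_cont_on; use s1 s2 in \<open>auto simp: sys_def\<close>)+
  define k1 where "k1 x = -((real N + 1)/x - x/2) - x*ya x" for x
  define k2 where "k2 x = 1 - x*pb x - real N*(ya x + yb x)" for x
  have "continuous_on {c..d} k1" unfolding k1_def using c
    by (intro continuous_intros cy1) auto
  then obtain K1 where K1: "\<And>x. x \<in> {c..d} \<Longrightarrow> \<bar>k1 x\<bar> \<le> K1" using bounded_cont_Icc by metis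
  have "continuous_on {c..d} k2" unfolding k2_def using c
    by (intro continuous_intros cy1)
  then obtain K2 where K2: "\<And>x. x \<in> {c..d} \<Longrightarrow> \<bar>k2 x\<bar> \<le> K2" using bounded_cont_Icc by metis
  define K0 where "K0 = max K1 K2"
  define K where "K = 1 + 3*K0"
  define E where "E x = (ya x - yb x)\<^sup>2 + (pa x - pb x)\<^sup>2" for x
  have dE: "(E has_real_derivative (2*(ya z - yb z)*(pa z - pb z) + 2*(pa z - pb z)*(k1 z*(pa z - pb z) + k2 z*(ya z - yb z)))) (at z)"
    if z: "z \<in> {c..d}" for z
  proof -
    have "(E has_real_derivative (2*(ya z - yb z)*(pa z - pb z) + 2*(pa z - pb z)*(fN N z (ya z) (pa z) - fN N z (yb z) (pb z)))) (at z)"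
      unfolding E_def using s1[OF z] s2[OF z] unfolding sys_def
      by (auto intro!: derivative_eq_intros simp: power2_eq_square algebra_simps)
    moreover have "fN N z (ya z) (pa z) - fN N z (yb z) (pb z) = k1 z*(pa z - pb z) + k2 z*(ya z - yb z)"
      unfolding k1_def k2_def using z c by (subst fN_diff) auto
    ultimately show ?thesis by simp
  qed
  have bnd: "\<bar>2*(ya z - yb z)*(pa z - pb z) + 2*(pa z - pb z)*(k1 z*(pa z - pb z) + k2 z*(ya z - yb z))\<bar> \<le> K * E z"
    if z: "z \<in> {c..d}" for z
    unfolding K_def E_def
    by (rule ineq1) (use K1[OF z] K2[OF z] in \<open>auto simp: K0_def\<close>)
  have E0: "E t = 0" using t unfolding E_def by simp
  have Enn: "E z \<ge> 0" for z unfolding E_def by simp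
  have "E x = 0"
  proof (cases "t \<le> x")
    case True
    define G where "G z = E z * exp (- K * z)" for z
    have "G x \<le> G t"
    proof (rule DERIV_nonpos_imp_nonincreasing[OF True])
      fix z assume "t \<le> z" "z \<le> x"
      then have z: "z \<in> {c..d}" using t x by auto
      let ?D = "2*(ya z - yb z)*(pa z - pb z) + 2*(pa z - pb z)*(k1 z*(pa z - pb z) + k2 z*(ya z - yb z))"
      have "(G has_real_derivative (?D * exp (- K * z) + E z * (exp (- K * z) * (- K)))) (at z)"
        unfolding G_def by (auto intro!: derivative_eq_intros dE[OF z])
      moreover have "?D * exp (- K * z) + E z * (exp (- K * z) * (- K)) \<le> 0"
      proof -
        have "?D \<le> K * E z" using bnd[OF z] by linarith
        then have "?D * exp (- K * z) \<le> K * E z * exp (- K * z)" by (intro mult_right_mono) auto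
        then show ?thesis by (simp add: algebra_simps)
      qed
      ultimately show "\<exists>y. (G has_real_derivative y) (at z) \<and> y \<le> 0" by blast
    qed
    then have "E x * exp (- K * x) \<le> 0" using E0 unfolding G_def by simp
    then show ?thesis using Enn[of x] by (simp add: mult_le_0_iff)
  next
    case False
    define G where "G z = E z * exp (K * z)" for z
    have "G x \<le> G t"
    proof (rule DERIV_nonneg_imp_nondecreasing[of x t G])
      show "x \<le> t" using False by simp
      fix z assume "x \<le> z" "z \<le> t"
      then have z: "z \<in> {c..d}" using t x by auto
      let ?D = "2*(ya z - yb z)*(pa z - pb z) + 2*(pa z - pb z)*(k1 z*(pa z - pb z) + k2 z*(ya z - yb z))"
      have "(G has_real_derivative (?D * exp (K * z) + E z * (exp (K * z) * K))) (at z)"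
        unfolding G_def by (auto intro!: derivative_eq_intros dE[OF z])
      moreover have "?D * exp (K * z) + E z * (exp (K * z) * K) \<ge> 0"
      proof -
        have "?D \<ge> - (K * E z)" using bnd[OF z] by linarith
        then have "?D * exp (K * z) \<ge> - (K * E z) * exp (K * z)" by (intro mult_right_mono) auto
        then show ?thesis by (simp add: algebra_simps)
      qed
      ultimately show "\<exists>y. (G has_real_derivative y) (at z) \<and> y \<ge> 0" by blast
    qed
    then have "E x * exp (K * x) \<le> 0" using E0 unfolding G_def by simp
    then show ?thesis using Enn[of x] by (simp add: mult_le_0_iff)
  qed
  then show ?thesis unfolding E_def
    by (smt (verit) sum_power2_eq_zero_iff)
qed

lemma uniq_int:
  fixes ya pa yb pb :: "real \<Rightarrow> real"
  assumes I: "I \<subseteq> {0<..}" "\<And>x z. x \<in> I \<Longrightarrow> z \<in> I \<Longrightarrow> {min x z..max x z} \<subseteq> I"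
    and s1: "\<And>x. x \<in> I \<Longrightarrow> sys N ya pa x"
    and s2: "\<And>x. x \<in> I \<Longrightarrow> sys N yb pb x"
    and t: "t \<in> I" "ya t = yb t" "pa t = pb t"
    and x: "x \<in> I"
  shows "ya x = yb x \<and> pa x = pb x"
proof -
  have sub: "{min x t..max x t} \<subseteq> I" using I(2) x t(1) by blast
  have "0 < min x t" using I(1) x t(1) by (auto simp: min_def)
  moreover have "t \<in> {min x t..max x t}" "x \<in> {min x t..max x t}" by auto
  ultimately show ?thesis
    using uniq_cpt[where c="min x t" and d="max x t"] sub s1 s2 t by blast
qed

lemma pos_sol_sys: "pos_sol N \<psi> l \<Longrightarrow> \<xi> > l \<Longrightarrow> sys N \<psi> (deriv \<psi>) \<xi> \<and> \<psi> \<xi> > 0"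
  unfolding pos_sol_iff using solat_sys by blast

lemma iv_Ioi: "a \<in> {c<..} \<Longrightarrow> b \<in> {c<..} \<Longrightarrow> {min a b..max a b} \<subseteq> {c<..}"
  for a b c :: real by (auto simp: min_def max_def)

lemma iv_Ioo: "a \<in> {c<..<d} \<Longrightarrow> b \<in> {c<..<d} \<Longrightarrow> {min a b..max a b} \<subseteq> {c<..<d}"
  for a b c d :: real by (auto simp: min_def max_def)

lemma sol_agree:
  assumes s1: "pos_sol N \<psi>1 l1" and s2: "pos_sol N \<psi>2 l2" and pos: "l1 \<ge> 0" "l2 \<ge> 0"
    and e1: "\<forall>\<xi>>max l1 l0. \<psi>1 \<xi> = \<phi> \<xi>" and e2: "\<forall>\<xi>>max l2 l0. \<psi>2 \<xi> = \<phi> \<xi>"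
    and x: "x > max l1 l2"
  shows "\<psi>1 x = \<psi>2 x"
proof -
  define t where "t = max (max l1 l2) l0 + 1"
  have eqn: "\<psi>1 z = \<psi>2 z" if "z > max (max l1 l2) l0" for z using e1 e2 that by auto
  have ev: "eventually (\<lambda>z. \<psi>1 z = \<psi>2 z) (nhds t)"
    unfolding eventually_nhds
    by (rule exI[of _ "{max (max l1 l2) l0<..}"]) (auto simp: t_def eqn)
  have "deriv \<psi>1 t = deriv \<psi>2 t" by (rule deriv_cong_ev[OF ev refl])
  moreover have "\<psi>1 t = \<psi>2 t" using eqn[of t] t_def by simp
  moreover have tg: "t > max l1 l2" unfolding t_def by (smt (verit) max.cobounded1)
  ultimately have "\<psi>1 x = \<psi>2 x \<and> deriv \<psi>1 x = deriv \<psi>2 x"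
    apply (intro uniq_int[where I="{max l1 l2<..}" and t=t and N=N and ya="\<psi>1" and yb="\<psi>2"
       and pa="deriv \<psi>1" and pb="deriv \<psi>2" and x=x] iv_Ioi)
    using pos x pos_sol_sys[OF s1] pos_sol_sys[OF s2]
    using tg by auto
  then show ?thesis by simp
qed

lemma glue:
  assumes l0: "l0 > 0" and sol: "pos_sol N \<phi> l0"
  defines "S \<equiv> {l. l > 0 \<and> (\<exists>\<psi>. pos_sol N \<psi> l \<and> (\<forall>\<xi>>max l l0. \<psi> \<xi> = \<phi> \<xi>))}"
  shows "ext_inf N \<phi> l0 = Inf S" "l0 \<in> S" "bdd_below S" "0 \<le> Inf S" "Inf S \<le> l0"
    "\<exists>\<Psi>. pos_sol N \<Psi> (Inf S) \<and> (\<forall>\<xi>>l0. \<Psi> \<xi> = \<phi> \<xi>)"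
proof -
  show "ext_inf N \<phi> l0 = Inf S" unfolding ext_inf_def S_def ..
  show l0S: "l0 \<in> S" unfolding S_def using l0 sol by auto
  show bdd: "bdd_below S" unfolding S_def bdd_below_def by (rule exI[of _ 0]) auto
  show "0 \<le> Inf S" using l0S by (intro cInf_greatest) (auto simp: S_def)
  show "Inf S \<le> l0" using l0S bdd by (rule cInf_lower)
  define W where "W l = (SOME \<psi>. pos_sol N \<psi> l \<and> (\<forall>\<xi>>max l l0. \<psi> \<xi> = \<phi> \<xi>))" for l
  have W: "pos_sol N (W l) l \<and> (\<forall>\<xi>>max l l0. W l \<xi> = \<phi> \<xi>)" if "l \<in> S" for l
  proof -
    have "\<exists>\<psi>. pos_sol N \<psi> l \<and> (\<forall>\<xi>>max l l0. \<psi> \<xi> = \<phi> \<xi>)" using that unfolding S_def by blast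
    then show ?thesis unfolding W_def by (rule someI_ex)
  qed
  have ex: "\<exists>l. l \<in> S \<and> l < \<xi>" if "\<xi> > Inf S" for \<xi>
    using cInf_less_iff[of S \<xi>] l0S bdd that by auto
  define L where "L \<xi> = (SOME l. l \<in> S \<and> l < \<xi>)" for \<xi>
  have L: "L \<xi> \<in> S \<and> L \<xi> < \<xi>" if "\<xi> > Inf S" for \<xi>
    unfolding L_def using ex[OF that] by (rule someI_ex)
  define \<Psi> where "\<Psi> \<xi> = W (L \<xi>) \<xi>" for \<xi>
  have Spos: "l \<in> S \<Longrightarrow> l > 0" for l unfolding S_def by auto
  have eqW: "\<Psi> \<eta> = W l \<eta>" if "l \<in> S" "\<eta> > l" for l \<eta>
  proof -
    have "\<eta> > Inf S" using that bdd cInf_lower by fastforce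
    then have "L \<eta> \<in> S" "L \<eta> < \<eta>" using L by auto
    then show ?thesis unfolding \<Psi>_def
      using sol_agree[of N "W (L \<eta>)" "L \<eta>" "W l" l l0 \<phi> \<eta>] W[of "L \<eta>"] W[OF that(1)] Spos[of "L \<eta>"] Spos[of l] that
      by auto
  qed
  have "pos_sol N \<Psi> (Inf S)"
    unfolding pos_sol_iff
  proof (intro allI impI)
    fix \<xi> assume "\<xi> > Inf S"
    then obtain l where l: "l \<in> S" "l < \<xi>" using ex by blast
    have s: "sys N (W l) (deriv (W l)) z \<and> W l z > 0" if "z \<in> {l<..}" for z
      using pos_sol_sys W[OF l(1)] that by auto
    show "solat N \<Psi> \<xi>"
      apply (rule sys_solat[where S="{l<..}" and p="deriv (W l)"])
      subgoal for z apply (rule sys_transfer[where y="W l" and S="{l<..}"])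
        using s eqW[OF l(1)] by auto
      using l s eqW[OF l(1)] by auto
  qed
  moreover have "\<forall>\<xi>>l0. \<Psi> \<xi> = \<phi> \<xi>"
  proof (intro allI impI)
    fix \<xi> assume "\<xi> > l0"
    then have "\<xi> > Inf S" using \<open>Inf S \<le> l0\<close> by simp
    then show "\<Psi> \<xi> = \<phi> \<xi>" unfolding \<Psi>_def using L W \<open>\<xi> > l0\<close> by auto
  qed
  ultimately show "\<exists>\<Psi>. pos_sol N \<Psi> (Inf S) \<and> (\<forall>\<xi>>l0. \<Psi> \<xi> = \<phi> \<xi>)" by blast
qed

definition Fm :: "nat \<Rightarrow> (real \<Rightarrow> real) \<Rightarrow> real \<Rightarrow> real" where
  "Fm N u \<xi> = \<xi>^(N+1) * deriv u \<xi> - \<xi>^(N+2) * u \<xi> / 2 + \<xi>^(N+2) * (u \<xi>)\<^sup>2 / 2"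

lemma powm1: "real N * x ^ (N - Suc 0) * x = real N * x ^ N" for x :: real
  by (cases N) auto

lemma powm2: "N \<ge> 1 \<Longrightarrow> x ^ (N - Suc 0) * x = x ^ N" "N \<ge> 1 \<Longrightarrow> x * x ^ (N - Suc 0) = x ^ N"
  for x :: real by (cases N; simp)+

lemma powm3: "N \<ge> 1 \<Longrightarrow> x \<noteq> 0 \<Longrightarrow> x ^ (N - Suc 0) = x ^ N / x"
  for x :: real by (cases N; simp)

lemma F_deriv:
  assumes sol: "pos_sol N u l" and l: "l \<ge> 0" and x: "x > l" and N1: "N \<ge> 1"
  shows "(Fm N u has_real_derivative - (x^(N+1)) * (real N/2 * u x + (real N/2 - 1) * (u x)\<^sup>2)) (at x)"
proof -
  have s: "sys N u (deriv u) x" using pos_sol_sys[OF sol x] by blast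
  have x0: "x \<noteq> 0" using l x by auto
  have "(Fm N u has_real_derivative
      (real (N+1) * x^N * deriv u x + x^(N+1) * fN N x (u x) (deriv u x))
      - (real (N+2) * x^(N+1) * u x / 2 + x^(N+2) * deriv u x / 2)
      + (real (N+2) * x^(N+1) * (u x)\<^sup>2 / 2 + x^(N+2) * (2 * u x * deriv u x) / 2)) (at x)"
    unfolding Fm_def[abs_def] using s unfolding sys_def
    using x0 N1 by (auto intro!: derivative_eq_intros simp: power2_eq_square powm3 field_simps)
  moreover have "(real (N+1) * x^N * deriv u x + x^(N+1) * fN N x (u x) (deriv u x))
      - (real (N+2) * x^(N+1) * u x / 2 + x^(N+2) * deriv u x / 2)
      + (real (N+2) * x^(N+1) * (u x)\<^sup>2 / 2 + x^(N+2) * (2 * u x * deriv u x) / 2)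
      = - (x^(N+1)) * (real N/2 * u x + (real N/2 - 1) * (u x)\<^sup>2)"
    unfolding fN_def using x0 by (simp add: field_simps power2_eq_square)
  ultimately show ?thesis by simp
qed

lemma F_mono:
  assumes sol: "pos_sol N u l" and l: "l \<ge> 0" and N: "N \<ge> 2" and st: "l < s" "s \<le> t"
  shows "Fm N u t \<le> Fm N u s"
proof (rule DERIV_nonpos_imp_nonincreasing[of s t "Fm N u"])
  fix x assume x: "s \<le> x" "x \<le> t"
  then have xl: "x > l" using st by simp
  have ux: "u x > 0" using pos_sol_sys[OF sol xl] by blast
  have "x^(N+1) > 0" using xl l by simp
  moreover have "real N/2 * u x + (real N/2 - 1) * (u x)\<^sup>2 \<ge> 0"
    using ux N by (intro add_nonneg_nonneg mult_nonneg_nonneg) auto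
  ultimately show "\<exists>y. (Fm N u has_real_derivative y) (at x) \<and> y \<le> 0"
    using F_deriv[OF sol l xl] N by (intro exI conjI) (auto simp: mult_nonneg_nonneg)
qed (use st in auto)

definition CB :: "nat \<Rightarrow> real \<Rightarrow> real" where
  "CB N B = real N/2 * B + (real N/2 - 1) * B\<^sup>2"

lemma H_mono:
  assumes sol: "pos_sol N u l" and l: "l \<ge> 0" and N: "N \<ge> 2" and st: "l < s" "s \<le> t"
    and B: "\<And>x. x > l \<Longrightarrow> u x \<le> B"
  shows "Fm N u s + CB N B * s^(N+2) / real (N+2) \<le> Fm N u t + CB N B * t^(N+2) / real (N+2)"
proof (rule DERIV_nonneg_imp_nondecreasing[of s t "\<lambda>x. Fm N u x + CB N B * x^(N+2) / real (N+2)"])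
  fix x assume x: "s \<le> x" "x \<le> t"
  then have xl: "x > l" using st by simp
  have ux: "u x > 0" using pos_sol_sys[OF sol xl] by blast
  have xp: "x^(N+1) > 0" using xl l by simp
  have "real N/2 * u x + (real N/2 - 1) * (u x)\<^sup>2 \<le> CB N B"
    unfolding CB_def using ux N B[OF xl]
    by (intro add_mono mult_left_mono power_mono) auto
  then have "x^(N+1) * (real N/2 * u x + (real N/2 - 1) * (u x)\<^sup>2) \<le> x^(N+1) * CB N B"
    using xp by (intro mult_left_mono) auto
  moreover have "((\<lambda>x. Fm N u x + CB N B * x^(N+2) / real (N+2)) has_real_derivative
     - (x^(N+1)) * (real N/2 * u x + (real N/2 - 1) * (u x)\<^sup>2) + CB N B * x^(N+1)) (at x)"
  proof (rule DERIV_add)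
    show "(Fm N u has_real_derivative - (x^(N+1)) * (real N/2 * u x + (real N/2 - 1) * (u x)\<^sup>2)) (at x)"
      using N by (intro F_deriv[OF sol l xl]) auto
    have "((\<lambda>x. CB N B * x^(N+2) / real (N+2)) has_real_derivative CB N B * (real (N+2) * x^(N+2 - Suc 0)) / real (N+2)) (at x)"
      by (intro DERIV_cdivide DERIV_cmult DERIV_pow)
    then show "((\<lambda>x. CB N B * x^(N+2) / real (N+2)) has_real_derivative CB N B * x^(N+1)) (at x)"
      by simp
  qed
  ultimately show "\<exists>y. ((\<lambda>x. Fm N u x + CB N B * x^(N+2) / real (N+2)) has_real_derivative y) (at x) \<and> y \<ge> 0"
    by (intro exI conjI) (auto simp: algebra_simps)
qed (use st in auto)

lemma deriv_F:
  assumes "x > 0"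
  shows "deriv u x = Fm N u x / x^(N+1) - x * u x * (u x - 1) / 2"
  using assms unfolding Fm_def by (simp add: field_simps power2_eq_square)

lemma arith_contra:
  fixes a b un um M0 :: real
  assumes "0 < a" "a \<le> b" "0 < un" "un < M0" "um > M0 + 1" "M0 \<ge> 1"
  shows "a * (un * (un - 1)) < b * (um * (um - 1))"
proof -
  have 1: "un * (un - 1) < M0 * M0"
  proof -
    have "un * (un - 1) \<le> un * un" using assms by (simp add: algebra_simps)
    also have "\<dots> < M0 * M0" using assms by (intro mult_strict_mono) auto
    finally show ?thesis .
  qed
  have 2: "M0 * M0 < um * (um - 1)"
  proof -
    have "M0 * M0 \<le> M0 * (M0 + 1 - 1)" by simp
    also have "\<dots> < um * (um - 1)" using assms by (intro mult_strict_mono) auto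
    finally show ?thesis .
  qed
  have "a * (un * (un - 1)) < a * (M0 * M0)" using 1 assms by simp
  also have "\<dots> \<le> b * (M0 * M0)" using assms by (intro mult_right_mono) auto
  also have "\<dots> < b * (um * (um - 1))" using 2 assms by simp
  finally show ?thesis .
qed

lemma Fm_crit: "deriv u x = 0 \<Longrightarrow> Fm N u x = x^(N+2) * (u x * (u x - 1)) / 2"
  unfolding Fm_def by (simp add: algebra_simps power2_eq_square)

lemma unbdd_case:
  assumes sol: "pos_sol N u l" and l: "l \<ge> 0" and N: "N \<ge> 2"
    and nb: "\<not> bounded (u ` {l<..})"
    and bt: "\<And>b. b > l \<Longrightarrow> \<exists>K. \<forall>x\<ge>b. u x \<le> K"
  shows "filterlim u at_top (at_right l)"
proof -
  have pos: "u x > 0" and sx: "sys N u (deriv u) x" if "x > l" for x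
    using pos_sol_sys[OF sol that] by auto
  have dx: "(u has_real_derivative deriv u x) (at x)" if "x > l" for x
    using sx[OF that] unfolding sys_def by blast
  have high: "\<exists>y. l < y \<and> y < b \<and> u y > M" if b: "b > l" for b M
  proof (rule ccontr)
    assume "\<not> ?thesis"
    then have le: "\<And>y. l < y \<Longrightarrow> y < b \<Longrightarrow> u y \<le> M" by force
    obtain K where K: "\<forall>x\<ge>b. u x \<le> K" using bt[OF b] by blast
    have "\<forall>z\<in>u ` {l<..}. norm z \<le> max M K"
    proof
      fix z assume "z \<in> u ` {l<..}"
      then obtain x where x: "x > l" "z = u x" by auto
      have "u x \<le> max M K"
        using le[of x] K x by (cases "x < b") (auto simp: not_less)
      then show "norm z \<le> max M K" using pos[OF x(1)] x by auto
    qed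
    then have "bounded (u ` {l<..})" unfolding bounded_iff by blast
    then show False using nb by blast
  qed
  show ?thesis unfolding filterlim_at_top
  proof (intro allI, rule ccontr)
    fix Z assume nev: "\<not> eventually (\<lambda>x. Z \<le> u x) (at_right l)"
    define M0 where "M0 = max Z 1"
    have M0: "M0 \<ge> 1" unfolding M0_def by simp
    have low: "\<exists>y. l < y \<and> y < b \<and> u y < M0" if b: "b > l" for b
    proof -
      from nev have "\<not> (\<exists>b>l. \<forall>y>l. y < b \<longrightarrow> Z \<le> u y)" unfolding eventually_at_right_field .
      then obtain y where "l < y" "y < b" "u y < Z" using b by force
      then show ?thesis unfolding M0_def by (intro exI[of _ y]) auto
    qed
    obtain r where r: "l < r" "r < l + 1" "u r < M0" using low[of "l+1"] by auto
    obtain q where q: "l < q" "q < r" "u q > M0 + 1" using high[of r "M0+1"] r by auto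
    obtain p where p: "l < p" "p < q" "u p < M0" using low[of q] q by auto
    obtain p' where p': "l < p'" "p' < p" "u p' > M0" using high[of p M0] p by auto
    have cont: "continuous_on {p'..r} u"
      by (rule deriv_cont_on[where g="deriv u"]) (use dx p' in auto)
    obtain n where n: "n \<in> {p'..q}" "\<And>y. y \<in> {p'..q} \<Longrightarrow> u n \<le> u y"
    proof -
      have "continuous_on {p'..q} u" by (rule continuous_on_subset[OF cont]) (use q in auto)
      then show ?thesis using continuous_attains_inf[OF compact_Icc, of p' q u] p q p' that by auto
    qed
    have "u n \<le> u p" using n p p' by auto
    then have un: "u n < M0" using p by simp
    have nin: "p' < n" "n < q"
      using n(1) un p' q M0 by (auto simp: le_less)
    have dn: "deriv u n = 0"
    proof (rule DERIV_local_min[OF dx[of n]])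
      show "l < n" using nin p' by simp
      show "0 < min (n - p') (q - n)" using nin by simp
      show "\<forall>y. \<bar>n - y\<bar> < min (n - p') (q - n) \<longrightarrow> u n \<le> u y"
        using n(2) by (auto simp: abs_less_iff)
    qed
    obtain m where m: "m \<in> {n..r}" "\<And>y. y \<in> {n..r} \<Longrightarrow> u y \<le> u m"
    proof -
      have "continuous_on {n..r} u" by (rule continuous_on_subset[OF cont]) (use nin in auto)
      then show ?thesis using continuous_attains_sup[OF compact_Icc, of n r u] nin q that by auto
    qed
    have "u q \<le> u m" using m nin q by auto
    then have um: "u m > M0 + 1" using q by simp
    have min: "n < m" "m < r"
      using m(1) um un r M0 by (auto simp: le_less)
    have dm: "deriv u m = 0"
    proof (rule DERIV_local_max[OF dx[of m]])
      show "l < m" using min nin p' by simp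
      show "0 < min (m - n) (r - m)" using min by simp
      show "\<forall>y. \<bar>m - y\<bar> < min (m - n) (r - m) \<longrightarrow> u y \<le> u m"
        using m(2) by (auto simp: abs_less_iff)
    qed
    have ln: "l < n" using nin p' by simp
    have "Fm N u m \<le> Fm N u n" using F_mono[OF sol l N ln] min by simp
    then have "m^(N+2) * (u m * (u m - 1)) \<le> n^(N+2) * (u n * (u n - 1))"
      using Fm_crit[OF dn] Fm_crit[OF dm] by simp
    moreover have "n^(N+2) * (u n * (u n - 1)) < m^(N+2) * (u m * (u m - 1))"
      using ln l min pos[OF ln] un um M0
      by (intro arith_contra power_mono) auto
    ultimately show False by simp
  qed
qed

lemma dinvpow:
  assumes "s > 0" "N \<ge> 1"
  shows "((\<lambda>s. A / s^N) has_real_derivative - (A * real N) / s^(N+1)) (at s)"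
proof -
  have "((\<lambda>s. A / s^N) has_real_derivative - (A * (real N * s^(N - Suc 0))) / (s^N * s^N)) (at s)"
    using assms by (auto intro!: derivative_eq_intros)
  moreover have "- (A * (real N * s^(N - Suc 0))) / (s^N * s^N) = - (A * real N) / s^(N+1)"
    using assms by (simp add: powm3 field_simps)
  ultimately show ?thesis by simp
qed

lemma exists_small:
  fixes x1 A K :: real
  assumes "x1 > 0" "A > 0" "N \<ge> 1"
  shows "\<exists>s. 0 < s \<and> s \<le> x1 \<and> A / s^N > K"
proof -
  define s where "s = min x1 (min 1 (A / (\<bar>K\<bar> + 1)))"
  have s0: "s > 0" unfolding s_def using assms by auto
  have s1: "s \<le> 1" "s \<le> A / (\<bar>K\<bar> + 1)" "s \<le> x1" unfolding s_def by auto
  have "s^N \<le> s^1" using s0 s1 assms(3) by (intro power_decreasing) auto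
  then have sN: "s^N \<le> s" by simp
  have "s * (\<bar>K\<bar> + 1) \<le> A" using s1(2) by (simp add: field_simps)
  then have "s^N * (\<bar>K\<bar> + 1) \<le> A" using sN by (smt (verit) mult_right_mono abs_ge_zero)
  then have "\<bar>K\<bar> + 1 \<le> A / s^N" using s0 by (simp add: field_simps)
  then show ?thesis using s0 s1 by (intro exI[of _ s]) auto
qed

lemma zero_case:
  assumes sol: "pos_sol N u 0" and N: "N \<ge> 2" and B: "\<And>x. x > 0 \<Longrightarrow> u x \<le> B"
  shows "(\<exists>L. (u \<longlongrightarrow> L) (at_right 0)) \<and> (deriv u \<longlongrightarrow> 0) (at_right 0)"
proof -
  have pos: "u x > 0" and sx: "sys N u (deriv u) x" if "x > 0" for x
    using pos_sol_sys[OF sol that] by auto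
  have dx: "(u has_real_derivative deriv u x) (at x)" if "x > 0" for x
    using sx[OF that] unfolding sys_def by blast
  have B0: "B \<ge> 0" using B[of 1] pos[of 1] by simp
  have uu1: "u x * (u x - 1) \<le> B\<^sup>2" if "x > 0" for x
  proof (cases "u x \<ge> 1")
    case True
    then have "u x * (u x - 1) \<le> B * B" using B[OF that] pos[OF that]
      by (intro mult_mono) auto
    then show ?thesis by (simp add: power2_eq_square)
  next
    case False
    then have "u x * (u x - 1) \<le> 0" using pos[OF that] by (simp add: mult_nonneg_nonpos)
    then show ?thesis by (smt (verit) zero_le_power2)
  qed
  have uu2: "u x * (u x - 1) \<ge> -1" if "x > 0" for x
  proof -
    have "0 \<le> (u x - 1/2)\<^sup>2" by simp
    then show ?thesis by (simp add: power2_eq_square algebra_simps)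
  qed
  have dF: "deriv u x = Fm N u x / x^(N+1) - x * u x * (u x - 1) / 2" if "x > 0" for x
    using deriv_F[OF that] .
  have Fle: "Fm N u x \<le> 0" if x: "x > 0" for x
  proof (rule ccontr)
    assume "\<not> ?thesis"
    then have c: "Fm N u x > 0" by simp
    define c where "c = Fm N u x"
    define H where "H s = u s + (c / real N) / s^N + B\<^sup>2 * s\<^sup>2 / 4" for s
    have Hm: "H s \<le> H x" if s: "0 < s" "s \<le> x" for s
    proof (rule DERIV_nonneg_imp_nondecreasing[of s x H])
      fix z assume z: "s \<le> z" "z \<le> x"
      then have z0: "z > 0" using s by simp
      have dH0: "(H has_real_derivative deriv u z + (- ((c / real N) * real N) / z^(N+1)) + B\<^sup>2 * (2 * z) / 4) (at z)"
        unfolding H_def[abs_def]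
        by (intro DERIV_add dx z0 dinvpow) (use N z0 in \<open>auto intro!: derivative_eq_intros\<close>)
      have eqd: "deriv u z + (- ((c / real N) * real N) / z^(N+1)) + B\<^sup>2 * (2 * z) / 4 = deriv u z - c / z^(N+1) + z * B\<^sup>2 / 2"
        using N by simp
      have dH: "(H has_real_derivative deriv u z - c / z^(N+1) + z * B\<^sup>2 / 2) (at z)" using dH0 unfolding eqd .
      have Fz: "Fm N u z \<ge> c" unfolding c_def using F_mono[OF sol _ N z0 z(2)] by simp
      have zp: "z^(N+1) > 0" using z0 by simp
      have a1: "c / z^(N+1) \<le> Fm N u z / z^(N+1)" using Fz zp by (simp add: divide_right_mono)
      have a2: "z * (u z * (u z - 1)) \<le> z * B\<^sup>2" using uu1[OF z0] z0 by (simp add: mult_left_mono)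
      have a3: "deriv u z = Fm N u z / z^(N+1) - z * (u z * (u z - 1)) / 2" using dF[OF z0] by (simp add: mult.assoc)
      have "deriv u z - c / z^(N+1) + z * B\<^sup>2 / 2 \<ge> 0" using a1 a2 a3 by linarith
      then show "\<exists>y. (H has_real_derivative y) (at z) \<and> y \<ge> 0" using dH by blast
    qed (use s in auto)
    have cN: "c / real N > 0" using c N unfolding c_def by simp
    obtain s where s: "0 < s" "s \<le> x" "(c / real N) / s^N > \<bar>H x\<bar>"
      using exists_small[OF x cN, of N "\<bar>H x\<bar>"] N by auto
    have "u s = H s - (c / real N) / s^N - B\<^sup>2 * s\<^sup>2 / 4" unfolding H_def by simp
    also have "\<dots> \<le> H x - (c / real N) / s^N"
    proof -
      have "B\<^sup>2 * s\<^sup>2 / 4 \<ge> 0" by simp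
      then show ?thesis using Hm[OF s(1,2)] by linarith
    qed
    also have "\<dots> < 0" using s(3) by simp
    finally show False using pos[OF s(1)] by simp
  qed
  define C where "C = CB N B"
  have C0: "C \<ge> 0" unfolding C_def CB_def using B0 N by simp
  have Hge: "Fm N u x + C * x^(N+2) / real (N+2) \<ge> 0" if x: "x > 0" for x
  proof (rule ccontr)
    assume neg: "\<not> Fm N u x + C * x^(N+2) / real (N+2) \<ge> 0"
    define c where "c = - (Fm N u x + C * x^(N+2) / real (N+2))"
    have c: "c > 0" using neg unfolding c_def by simp
    define H where "H s = u s - (c / real N) / s^N - s\<^sup>2 / 4" for s
    have Hm: "H x \<le> H s" if s: "0 < s" "s \<le> x" for s
    proof (rule DERIV_nonpos_imp_nonincreasing[of s x H])
      fix z assume z: "s \<le> z" "z \<le> x"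
      then have z0: "z > 0" using s by simp
      have dH0: "(H has_real_derivative deriv u z - (- ((c / real N) * real N) / z^(N+1)) - (2 * z) / 4) (at z)"
        unfolding H_def[abs_def]
        by (intro DERIV_diff dx z0 dinvpow) (use N z0 in \<open>auto intro!: derivative_eq_intros\<close>)
      have eqd: "deriv u z - (- ((c / real N) * real N) / z^(N+1)) - (2 * z) / 4 = deriv u z + c / z^(N+1) - z / 2"
        using N by simp
      have dH: "(H has_real_derivative deriv u z + c / z^(N+1) - z / 2) (at z)" using dH0 unfolding eqd .
      have "Fm N u z + C * z^(N+2) / real (N+2) \<le> Fm N u x + C * x^(N+2) / real (N+2)"
        unfolding C_def using H_mono[OF sol _ N z0 z(2), of B] B by simp
      moreover have "C * z^(N+2) / real (N+2) \<ge> 0" using C0 z0 by simp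
      ultimately have Fz: "Fm N u z \<le> - c" unfolding c_def by linarith
      have zp: "z^(N+1) > 0" using z0 by simp
      have a1: "Fm N u z / z^(N+1) \<le> - c / z^(N+1)" using Fz zp using divide_right_mono[OF Fz, of "z^(N+1)"] by simp
      have a2: "z * (u z * (u z - 1)) \<ge> z * (-1)" using uu2[OF z0] z0 by (intro mult_left_mono) auto
      have a3: "deriv u z = Fm N u z / z^(N+1) - z * (u z * (u z - 1)) / 2" using dF[OF z0] by (simp add: mult.assoc)
      have "deriv u z + c / z^(N+1) - z / 2 \<le> 0" using a1 a2 a3 by simp
      then show "\<exists>y. (H has_real_derivative y) (at z) \<and> y \<le> 0" using dH by blast
    qed (use s in auto)
    have cN: "c / real N > 0" using c N by simp
    obtain s where s: "0 < s" "s \<le> x" "(c / real N) / s^N > \<bar>B - H x\<bar>"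
      using exists_small[OF x cN, of N "\<bar>B - H x\<bar>"] N by auto
    have "u s = H s + (c / real N) / s^N + s\<^sup>2 / 4" unfolding H_def by simp
    also have "\<dots> \<ge> H x + (c / real N) / s^N" using Hm[OF s(1,2)] zero_le_power2[of s] by linarith
    finally have "u s > B" using s(3) by linarith
    then show False using B[OF s(1)] by simp
  qed
  define D where "D = C / real (N+2) + (B\<^sup>2 + 1) / 2"
  have Dbd: "\<bar>deriv u x\<bar> \<le> D * x" if x: "x > 0" for x
  proof -
    have xp: "x^(N+1) > 0" using x by simp
    have "\<bar>Fm N u x\<bar> \<le> C * x^(N+2) / real (N+2)" using Fle[OF x] Hge[OF x] by simp
    moreover have "C * x^(N+2) / real (N+2) = (C / real (N+2) * x) * x^(N+1)"
      by (simp add: field_simps)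
    ultimately have "\<bar>Fm N u x\<bar> \<le> (C / real (N+2) * x) * x^(N+1)" by simp
    then have 1: "\<bar>Fm N u x / x^(N+1)\<bar> \<le> C / real (N+2) * x" using xp
      by (simp add: abs_div pos_divide_le_eq)
    have "\<bar>u x * (u x - 1)\<bar> \<le> B\<^sup>2 + 1" unfolding abs_le_iff using uu1[OF x] uu2[OF x] zero_le_power2[of B] by linarith
    then have "x * \<bar>u x * (u x - 1)\<bar> \<le> x * (B\<^sup>2 + 1)" using x by (intro mult_left_mono) auto
    moreover have "\<bar>x * u x * (u x - 1) / 2\<bar> = x * \<bar>u x * (u x - 1)\<bar> / 2" using x by (simp add: abs_mult mult.assoc)
    ultimately have 2: "\<bar>x * u x * (u x - 1) / 2\<bar> \<le> (B\<^sup>2 + 1) / 2 * x" by (simp add: mult.commute)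
    have "\<bar>deriv u x\<bar> \<le> \<bar>Fm N u x / x^(N+1)\<bar> + \<bar>x * u x * (u x - 1) / 2\<bar>" unfolding dF[OF x] by (rule abs_triangle_ineq4)
    moreover have "D * x = C / real (N+2) * x + (B\<^sup>2 + 1) / 2 * x" unfolding D_def by (simp add: algebra_simps)
    ultimately show ?thesis using 1 2 by linarith
  qed
  have D0: "D \<ge> 0" unfolding D_def using C0 by simp
  have lim_d: "(deriv u \<longlongrightarrow> 0) (at_right 0)"
  proof (rule tendsto_0_le[where f="\<lambda>x. x" and K=D])
    show "((\<lambda>x. x) \<longlongrightarrow> (0::real)) (at_right 0)" by (rule tendsto_ident_at)
    show "eventually (\<lambda>x. norm (deriv u x) \<le> norm x * D) (at_right 0)"
      unfolding eventually_at_right_field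
      by (rule exI[of _ 1]) (use Dbd in \<open>auto simp: mult.commute\<close>)
  qed
  define g where "g x = u x + D * x" for x
  have gmono: "g s \<le> g t" if "0 < s" "s \<le> t" "t \<le> 1" for s t
  proof (rule DERIV_nonneg_imp_nondecreasing[of s t g])
    fix z assume z: "s \<le> z" "z \<le> t"
    then have z0: "z > 0" and z1: "z \<le> 1" using that by auto
    have "(g has_real_derivative deriv u z + D) (at z)" unfolding g_def[abs_def]
      by (auto intro!: derivative_eq_intros dx z0)
    moreover have "deriv u z + D \<ge> 0"
    proof -
      have "D * z \<le> D" using D0 z0 z1 by (simp add: mult_left_le)
      then show ?thesis using Dbd[OF z0] by linarith
    qed
    ultimately show "\<exists>y. (g has_real_derivative y) (at z) \<and> y \<ge> 0" by blast
  qed (use that in auto)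
  have gpos: "g x \<ge> 0" if "x > 0" for x unfolding g_def using pos[OF that] D0 that by simp
  define L0 where "L0 = Inf (g ` {0<..<1})"
  have bdd: "bdd_below (g ` {0<..<1})" unfolding bdd_below_def using gpos by (intro exI[of _ 0]) auto
  have ne: "g ` {0<..<1} \<noteq> {}" by auto
  have lim_g: "(g \<longlongrightarrow> L0) (at_right 0)"
  proof (rule order_tendstoI)
    fix a assume a: "a < L0"
    show "eventually (\<lambda>x. a < g x) (at_right 0)"
      unfolding eventually_at_right_field
    proof (rule exI[of _ 1], intro conjI allI impI)
      fix y :: real assume "0 < y" "y < 1"
      then have "L0 \<le> g y" unfolding L0_def using bdd by (intro cInf_lower) auto
      then show "a < g y" using a by simp
    qed simp
  next
    fix a assume a: "L0 < a"
    then obtain s where s: "s \<in> {0<..<1}" "g s < a"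
      unfolding L0_def using cInf_less_iff[OF ne bdd] by auto
    show "eventually (\<lambda>x. g x < a) (at_right 0)"
      unfolding eventually_at_right_field
    proof (rule exI[of _ s], intro conjI allI impI)
      fix y :: real assume "0 < y" "y < s"
      then have "g y \<le> g s" using s by (intro gmono) auto
      then show "g y < a" using s by simp
    qed (use s in auto)
  qed
  have "((\<lambda>x. g x - D * x) \<longlongrightarrow> L0 - D * 0) (at_right 0)"
    by (intro tendsto_intros lim_g tendsto_ident_at)
  moreover have "(\<lambda>x. g x - D * x) = u" unfolding g_def by auto
  ultimately have "(u \<longlongrightarrow> L0) (at_right 0)" by simp
  then show ?thesis using lim_d by blast
qed

lemma vd_fst: "(h has_vector_derivative v) (at x) \<Longrightarrow> ((\<lambda>x. fst (h x)) has_real_derivative fst v) (at x)"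
  unfolding has_real_derivative_iff_has_vector_derivative has_vector_derivative_def
  using has_derivative_fst[of h "\<lambda>t. t *\<^sub>R v"] by simp

lemma vd_snd: "(h has_vector_derivative v) (at x) \<Longrightarrow> ((\<lambda>x. snd (h x)) has_real_derivative snd v) (at x)"
  unfolding has_real_derivative_iff_has_vector_derivative has_vector_derivative_def
  using has_derivative_snd[of h "\<lambda>t. t *\<^sub>R v"] by simp

lemma int_half_bound:
  fixes g :: "real \<Rightarrow> 'a::euclidean_space"
  assumes cont: "continuous_on {a..b} g" and L: "\<And>s. s \<in> {a..b} \<Longrightarrow> norm (g s) \<le> L"
    and uv: "a \<le> v" "v \<le> u" "u \<le> b"
  shows "norm (integral {a..u} g - integral {a..v} g) \<le> L * \<bar>u - v\<bar>"
proof -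
  have L0: "L \<ge> 0" using L[of a] uv by (meson atLeastAtMost_iff dual_order.trans norm_ge_zero order_refl)
  have int: "g integrable_on {a..u}"
    by (rule integrable_continuous_interval, rule continuous_on_subset[OF cont]) (use uv in auto)
  have "integral {a..v} g + integral {v..u} g = integral {a..u} g"
    by (rule Henstock_Kurzweil_Integration.integral_combine[OF uv(1,2) int])
  then have "integral {a..u} g - integral {a..v} g = integral {v..u} g" by (simp add: algebra_simps)
  moreover have "g integrable_on {v..u}"
    by (rule integrable_continuous_interval, rule continuous_on_subset[OF cont]) (use uv in auto)
  then have "norm (integral {v..u} g) \<le> L * Henstock_Kurzweil_Integration.content (cbox v u)"
    by (intro has_integral_bound[OF L0]) (use uv in \<open>auto simp: integrable_integral intro!: L\<close>)
  ultimately show ?thesis using uv by (simp add: content_real)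
qed

lemma int_diff_bound:
  fixes g :: "real \<Rightarrow> 'a::euclidean_space"
  assumes cont: "continuous_on {a..b} g" and L: "\<And>s. s \<in> {a..b} \<Longrightarrow> norm (g s) \<le> L"
    and uv: "u \<in> {a..b}" "v \<in> {a..b}"
  shows "norm (integral {a..u} g - integral {a..v} g) \<le> L * \<bar>u - v\<bar>"
proof (cases "v \<le> u")
  case True
  then show ?thesis using int_half_bound[OF cont L] uv by auto
next
  case False
  then have "norm (integral {a..v} g - integral {a..u} g) \<le> L * \<bar>v - u\<bar>"
    using int_half_bound[OF cont L] uv by auto
  then show ?thesis by (simp add: norm_minus_commute abs_minus_commute)
qed

definition GG :: "nat \<Rightarrow> real \<Rightarrow> real \<times> real \<Rightarrow> real \<times> real" where
  "GG N s Y = (snd Y, fN N s (fst Y) (snd Y))"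

lemma coef_bound:
  assumes "0 < c0" "c0 \<le> s" "s \<le> Xa"
  shows "\<bar>(real N + 1) / s - s / 2\<bar> \<le> (real N + 1) / c0 + Xa / 2"
proof -
  have "(real N + 1) / s \<le> (real N + 1) / c0" using assms by (intro divide_left_mono) auto
  moreover have "(real N + 1) / s \<ge> 0" "s / 2 \<ge> 0" "(real N + 1) / c0 \<ge> 0" using assms by auto
  moreover have "s / 2 \<le> Xa / 2" using assms by simp
  ultimately show ?thesis unfolding abs_le_iff by linarith
qed

lemma GG_bound:
  assumes s: "0 < c0" "c0 \<le> s" "s \<le> Xa" and R: "\<bar>fst Y\<bar> \<le> R" "\<bar>snd Y\<bar> \<le> R"
  shows "norm (GG N s Y) \<le> R + (((real N + 1) / c0 + Xa / 2) * R + R + R * (Xa * R + real N * R))"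
proof -
  obtain y q where Y: "Y = (y, q)" by fastforce
  have y: "\<bar>y\<bar> \<le> R" and q: "\<bar>q\<bar> \<le> R" using R Y by auto
  have R0: "R \<ge> 0" using y by simp
  define a where "a = (real N + 1) / s - s / 2"
  have a: "\<bar>a\<bar> \<le> (real N + 1) / c0 + Xa / 2" unfolding a_def by (rule coef_bound[OF s])
  have t1: "\<bar>a * q\<bar> \<le> ((real N + 1) / c0 + Xa / 2) * R"
    unfolding abs_mult by (rule mult_mono[OF a q]) (use s in auto)
  have "\<bar>s * q\<bar> \<le> Xa * R" unfolding abs_mult using s q by (intro mult_mono) auto
  moreover have "\<bar>real N * y\<bar> \<le> real N * R" unfolding abs_mult using y by (intro mult_mono) auto
  ultimately have "\<bar>s * q + real N * y\<bar> \<le> Xa * R + real N * R" by linarith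
  then have t2: "\<bar>y * (s * q + real N * y)\<bar> \<le> R * (Xa * R + real N * R)"
    unfolding abs_mult using y R0 by (intro mult_mono) auto
  have "fN N s y q = - (a * q) + y - y * (s * q + real N * y)" unfolding fN_def a_def by (simp add: algebra_simps)
  then have "\<bar>fN N s y q\<bar> \<le> \<bar>a * q\<bar> + \<bar>y\<bar> + \<bar>y * (s * q + real N * y)\<bar>" by (simp; arith)
  then have f: "\<bar>fN N s y q\<bar> \<le> ((real N + 1) / c0 + Xa / 2) * R + R + R * (Xa * R + real N * R)"
    using t1 t2 y by linarith
  have "norm (GG N s Y) \<le> norm q + norm (fN N s y q)" unfolding GG_def Y using norm_Pair_le[of q "fN N s y q"] by simp
  then show ?thesis using f q by simp
qed

lemma GG_lip:
  assumes s: "0 < c0" "c0 \<le> s" "s \<le> Xa" and R: "\<bar>fst Y1\<bar> \<le> R" "\<bar>snd Y1\<bar> \<le> R" "\<bar>fst Y2\<bar> \<le> R" "\<bar>snd Y2\<bar> \<le> R"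
  shows "norm (GG N s Y1 - GG N s Y2) \<le> (1 + ((real N + 1) / c0 + Xa / 2 + Xa * R) + (1 + Xa * R + 2 * real N * R)) * norm (Y1 - Y2)"
proof -
  obtain y1 q1 where Y1: "Y1 = (y1, q1)" by fastforce
  obtain y2 q2 where Y2: "Y2 = (y2, q2)" by fastforce
  have y1: "\<bar>y1\<bar> \<le> R" and q1: "\<bar>q1\<bar> \<le> R" and y2: "\<bar>y2\<bar> \<le> R" and q2: "\<bar>q2\<bar> \<le> R"
    using R Y1 Y2 by auto
  have R0: "R \<ge> 0" using y1 by simp
  define k1 where "k1 = -((real N + 1)/s - s/2) - s*y1"
  define k2 where "k2 = 1 - s*q2 - real N*(y1+y2)"
  define K1 where "K1 = (real N + 1) / c0 + Xa / 2 + Xa * R"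
  define K2 where "K2 = 1 + Xa * R + 2 * real N * R"
  have "\<bar>s * y1\<bar> \<le> Xa * R" unfolding abs_mult using s y1 by (intro mult_mono) auto
  then have k1: "\<bar>k1\<bar> \<le> K1" unfolding k1_def K1_def using coef_bound[OF s, of N] by (simp add: abs_le_iff; linarith)
  have "\<bar>s * q2\<bar> \<le> Xa * R" unfolding abs_mult using s q2 by (intro mult_mono) auto
  moreover have "\<bar>real N * (y1 + y2)\<bar> \<le> real N * (2 * R)" unfolding abs_mult using y1 y2 by (intro mult_mono) auto
  ultimately have k2: "\<bar>k2\<bar> \<le> K2" unfolding k2_def K2_def by (simp add: abs_le_iff; linarith)
  have K0: "K1 \<ge> 0" "K2 \<ge> 0" using k1 k2 by auto
  have diff: "GG N s Y1 - GG N s Y2 = (q1 - q2, k1 * (q1 - q2) + k2 * (y1 - y2))"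
    unfolding GG_def Y1 Y2 k1_def k2_def using fN_diff[of s N y1 q1 y2 q2] s by simp
  have nd: "\<bar>q1 - q2\<bar> \<le> norm (Y1 - Y2)" "\<bar>y1 - y2\<bar> \<le> norm (Y1 - Y2)"
    unfolding Y1 Y2 using norm_snd_le[of "q1 - q2" "y1 - y2"] norm_fst_le[of "y1 - y2" "q1 - q2"] by auto
  have "\<bar>k1 * (q1 - q2)\<bar> \<le> K1 * norm (Y1 - Y2)" unfolding abs_mult using k1 nd by (intro mult_mono) auto
  moreover have "\<bar>k2 * (y1 - y2)\<bar> \<le> K2 * norm (Y1 - Y2)" unfolding abs_mult using k2 nd by (intro mult_mono) auto
  moreover have "norm (GG N s Y1 - GG N s Y2) \<le> \<bar>q1 - q2\<bar> + \<bar>k1 * (q1 - q2) + k2 * (y1 - y2)\<bar>"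
    unfolding diff using norm_Pair_le[of "q1 - q2" "k1 * (q1 - q2) + k2 * (y1 - y2)"] by simp
  ultimately have "norm (GG N s Y1 - GG N s Y2) \<le> norm (Y1 - Y2) + K1 * norm (Y1 - Y2) + K2 * norm (Y1 - Y2)"
    using nd by (smt (verit) abs_triangle_ineq)
  then show ?thesis unfolding K1_def K2_def by (simp add: algebra_simps)
qed

lemma picard:
  fixes N :: nat and cc X B :: real
  assumes cc: "cc > 0"
  shows "\<exists>r>0. \<forall>\<rho> \<xi>0 Y0 P0. 0 < \<rho> \<and> \<rho> \<le> r \<and> cc + \<rho> \<le> \<xi>0 \<and> \<xi>0 + \<rho> \<le> X \<and> \<bar>Y0\<bar> \<le> B \<and> \<bar>P0\<bar> \<le> B \<longrightarrow>
           (\<exists>y p. y \<xi>0 = Y0 \<and> p \<xi>0 = P0 \<and> (\<forall>x\<in>{\<xi>0-\<rho><..<\<xi>0+\<rho>}. sys N y p x))"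
proof -
  define Xa where "Xa = \<bar>X\<bar> + cc"
  define R where "R = \<bar>B\<bar> + 1"
  define M where "M = R + (((real N + 1) / cc + Xa / 2) * R + R + R * (Xa * R + real N * R))"
  define K where "K = 1 + ((real N + 1) / cc + Xa / 2 + Xa * R) + (1 + Xa * R + 2 * real N * R)"
  have Xa: "Xa > 0" unfolding Xa_def using cc by simp
  have R: "R \<ge> 1" unfolding R_def by simp
  have M: "M > 0" unfolding M_def using R Xa cc
    by (intro add_pos_nonneg) (auto intro!: add_nonneg_nonneg mult_nonneg_nonneg)
  have K: "K > 0" unfolding K_def using R Xa cc
    by (intro add_pos_nonneg) (auto intro!: add_nonneg_nonneg mult_nonneg_nonneg)
  define r where "r = min (1 / M) (1 / (2 * K))"
  have r: "r > 0" unfolding r_def using M K by simp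
  show ?thesis
  proof (intro exI[of _ r] conjI allI impI r)
    fix \<rho> \<xi>0 Y0 P0
    assume H: "0 < \<rho> \<and> \<rho> \<le> r \<and> cc + \<rho> \<le> \<xi>0 \<and> \<xi>0 + \<rho> \<le> X \<and> \<bar>Y0\<bar> \<le> B \<and> \<bar>P0\<bar> \<le> B"
    define a where "a = \<xi>0 - \<rho>"
    define b where "b = \<xi>0 + \<rho>"
    have ab: "cc \<le> a" "a < \<xi>0" "\<xi>0 < b" "b \<le> Xa" using H cc unfolding a_def b_def Xa_def by auto
    have rhoM: "M * \<rho> \<le> 1" using H M unfolding r_def by (simp add: field_simps)
    have rhoK: "K * \<rho> \<le> 1/2" using H K unfolding r_def by (simp add: field_simps)
    define Z0 where "Z0 = (Y0, P0)"
    define cl where "cl x = max a (min b x)" for x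
    have cl: "cl x \<in> {a..b}" for x unfolding cl_def using ab by auto
    have cl_id: "cl x = x" if "x \<in> {a..b}" for x unfolding cl_def using that by auto
    have clc: "continuous_on UNIV cl" unfolding cl_def[abs_def] by (intro continuous_intros)
    have cl_near: "\<bar>cl x - \<xi>0\<bar> \<le> \<rho>" for x using cl[of x] unfolding a_def b_def by auto
    define g where "g Y s = GG N s (apply_bcontfun Y s)" for Y :: "real \<Rightarrow>\<^sub>C (real \<times> real)" and s
    have gc: "continuous_on {a..b} (g Y)" for Y
      unfolding g_def[abs_def] GG_def fN_def using ab cc
      by (intro continuous_intros continuous_on_compose2[OF continuous_on_apply_bcontfun]) auto
    have gi: "g Y integrable_on {a..b}" for Y by (rule integrable_continuous_interval[OF gc])
    have ic: "continuous_on {a..b} (\<lambda>u. integral {a..u} (g Y))" for Y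
      by (rule indefinite_integral_continuous_1[OF gi])
    define Tf where "Tf Y x = Z0 + integral {a..cl x} (g Y) - integral {a..\<xi>0} (g Y)" for Y x
    have Tfb: "Tf Y \<in> bcontfun" for Y
    proof -
      have c1: "continuous_on UNIV (\<lambda>x. integral {a..cl x} (g Y))"
        by (rule continuous_on_compose2[OF ic[of Y] clc]) (use cl in auto)
      have "continuous_on UNIV (Tf Y)" unfolding Tf_def[abs_def]
        by (intro continuous_intros c1)
      moreover have "bounded (range (Tf Y))"
      proof -
        have "range (Tf Y) \<subseteq> (\<lambda>u. Z0 + integral {a..u} (g Y) - integral {a..\<xi>0} (g Y)) ` {a..b}"
          unfolding Tf_def using cl by auto
        moreover have "compact ((\<lambda>u. Z0 + integral {a..u} (g Y) - integral {a..\<xi>0} (g Y)) ` {a..b})"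
          by (intro compact_continuous_image compact_Icc continuous_intros ic)
        ultimately show ?thesis by (meson bounded_subset compact_imp_bounded)
      qed
      ultimately show ?thesis unfolding bcontfun_def by simp
    qed
    define T where "T Y = Bcontfun (Tf Y)" for Y
    have Tapp: "apply_bcontfun (T Y) = Tf Y" for Y unfolding T_def using Tfb by (simp add: Bcontfun_inverse)
    define S where "S = PiC (UNIV :: real set) (\<lambda>_. cball Z0 1)"
    have memS: "Y \<in> S \<longleftrightarrow> (\<forall>x. dist Z0 (apply_bcontfun Y x) \<le> 1)" for Y
      unfolding S_def mem_PiC_iff by (auto simp: Pi_iff)
    have tube: "\<bar>fst (apply_bcontfun Y s)\<bar> \<le> R \<and> \<bar>snd (apply_bcontfun Y s)\<bar> \<le> R" if "Y \<in> S" for Y s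
    proof -
      have d: "norm (apply_bcontfun Y s - Z0) \<le> 1" using that memS by (simp add: dist_norm norm_minus_commute)
      have eqp: "apply_bcontfun Y s - Z0 = (fst (apply_bcontfun Y s) - Y0, snd (apply_bcontfun Y s) - P0)"
        by (simp add: Z0_def prod_eq_iff)
      have "\<bar>fst (apply_bcontfun Y s) - Y0\<bar> \<le> 1" "\<bar>snd (apply_bcontfun Y s) - P0\<bar> \<le> 1"
        using d[unfolded eqp] norm_fst_le[of "fst (apply_bcontfun Y s) - Y0" "snd (apply_bcontfun Y s) - P0"]
          norm_snd_le[of "snd (apply_bcontfun Y s) - P0" "fst (apply_bcontfun Y s) - Y0"]
        by auto
      then show ?thesis using H unfolding R_def by auto
    qed
    have gbd: "norm (g Y s) \<le> M" if "Y \<in> S" "s \<in> {a..b}" for Y s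
      unfolding g_def M_def using tube[OF that(1), of s] that(2) ab cc
      by (intro GG_bound) auto
    have closedS: "closed S" unfolding S_def by (rule closed_PiC) auto
    have completeS: "complete S" using closedS by (simp add: complete_eq_closed)
    have neS: "S \<noteq> {}"
    proof -
      have "const_bcontfun Z0 \<in> S" unfolding memS by (simp add: const_bcontfun.rep_eq)
      then show ?thesis by blast
    qed
    have TS: "T ` S \<subseteq> S"
    proof
      fix Z assume "Z \<in> T ` S"
      then obtain Y where Y: "Y \<in> S" and ZY: "Z = T Y" by auto
      have "dist Z0 (Tf Y x) \<le> 1" for x
      proof -
      have "norm (integral {a..cl x} (g Y) - integral {a..\<xi>0} (g Y)) \<le> M * \<bar>cl x - \<xi>0\<bar>"
        by (rule int_diff_bound[OF gc gbd[OF Y]]) (use cl ab in auto)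
      also have "\<dots> \<le> M * \<rho>" using cl_near M by (intro mult_left_mono) auto
      finally show "dist Z0 (Tf Y x) \<le> 1" using rhoM unfolding Tf_def dist_norm
        by (simp add: algebra_simps norm_minus_commute)
      qed
      then show "Z \<in> S" unfolding memS ZY Tapp by blast
    qed
    have contr: "dist (T Y1) (T Y2) \<le> (1/2) * dist Y1 Y2" if Y: "Y1 \<in> S" "Y2 \<in> S" for Y1 Y2
    proof (rule dist_bound)
      fix x
      define h where "h s = g Y1 s - g Y2 s" for s
      have hc: "continuous_on {a..b} h" unfolding h_def[abs_def] by (intro continuous_intros gc)
      have hb: "norm (h s) \<le> K * dist Y1 Y2" if s: "s \<in> {a..b}" for s
      proof -
        have "norm (h s) \<le> K * norm (apply_bcontfun Y1 s - apply_bcontfun Y2 s)"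
          unfolding h_def g_def K_def using tube[OF Y(1), of s] tube[OF Y(2), of s] s ab cc
          by (intro GG_lip) auto
        also have "\<dots> \<le> K * dist Y1 Y2" using K dist_bounded[of Y1 s Y2]
          by (intro mult_left_mono) (auto simp: dist_norm)
        finally show ?thesis .
      qed
      have sub: "integral {a..u} h = integral {a..u} (g Y1) - integral {a..u} (g Y2)" if "u \<in> {a..b}" for u
      proof -
        have "g Y1 integrable_on {a..u}" "g Y2 integrable_on {a..u}"
          using that by (auto intro!: integrable_continuous_interval continuous_on_subset[OF gc])
        then show ?thesis unfolding h_def by (rule integral_diff)
      qed
      have "norm (integral {a..cl x} h - integral {a..\<xi>0} h) \<le> K * dist Y1 Y2 * \<bar>cl x - \<xi>0\<bar>"
        by (rule int_diff_bound[OF hc hb]) (use cl ab in auto)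
      also have "\<dots> \<le> K * dist Y1 Y2 * \<rho>" using cl_near K by (intro mult_left_mono) auto
      also have "\<dots> = (K * \<rho>) * dist Y1 Y2" by simp
      also have "\<dots> \<le> (1/2) * dist Y1 Y2" using rhoK by (intro mult_right_mono) auto
      finally have "norm (integral {a..cl x} h - integral {a..\<xi>0} h) \<le> (1/2) * dist Y1 Y2" .
      moreover have "Tf Y1 x - Tf Y2 x = integral {a..cl x} h - integral {a..\<xi>0} h"
        unfolding Tf_def using sub[OF cl[of x]] sub[of \<xi>0] ab by (simp add: algebra_simps)
      ultimately show "dist (apply_bcontfun (T Y1) x) (apply_bcontfun (T Y2) x) \<le> (1/2) * dist Y1 Y2"
        unfolding Tapp dist_norm by simp
    qed
    obtain Y where YS: "Y \<in> S" and YT: "T Y = Y"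
      using Banach_fix[OF completeS neS _ _ TS contr] by auto
    have Yeq: "apply_bcontfun Y x = Tf Y x" for x using YT Tapp by metis
    define y where "y x = fst (apply_bcontfun Y x)" for x
    define p where "p x = snd (apply_bcontfun Y x)" for x
    have Yd: "(apply_bcontfun Y has_vector_derivative g Y x) (at x)" if x: "x \<in> {a<..<b}" for x
    proof -
      have "((\<lambda>u. integral {a..u} (g Y)) has_vector_derivative g Y x) (at x within {a..b})"
        using x by (intro integral_has_vector_derivative gc) auto
      then have "((\<lambda>u. integral {a..u} (g Y)) has_vector_derivative g Y x) (at x)"
        using x at_within_interior[of x "{a..b}"] by simp
      then have "((\<lambda>u. Z0 + integral {a..u} (g Y) - integral {a..\<xi>0} (g Y)) has_vector_derivative g Y x) (at x)"
        by (auto intro!: derivative_eq_intros)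
      then show ?thesis
        by (rule has_vector_derivative_transform_within_open[where S="{a<..<b}"])
           (use x in \<open>auto simp: Yeq Tf_def cl_id\<close>)
    qed
    have "apply_bcontfun Y \<xi>0 = Z0" using Yeq[of \<xi>0] cl_id[of \<xi>0] ab unfolding Tf_def by simp
    then have i1: "y \<xi>0 = Y0" "p \<xi>0 = P0" unfolding y_def p_def Z0_def by auto
    have i2: "sys N y p x" if "x \<in> {\<xi>0-\<rho><..<\<xi>0+\<rho>}" for x
    proof -
      have x: "x \<in> {a<..<b}" using that unfolding a_def b_def by simp
      have gY: "g Y x = (p x, fN N x (y x) (p x))" unfolding g_def GG_def y_def p_def by simp
      show "sys N y p x" unfolding sys_def
        using vd_fst[OF Yd[OF x]] vd_snd[OF Yd[OF x]] unfolding gY y_def[abs_def] p_def[abs_def] by simp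
    qed
    show "\<exists>y p. y \<xi>0 = Y0 \<and> p \<xi>0 = P0 \<and> (\<forall>x\<in>{\<xi>0-\<rho><..<\<xi>0+\<rho>}. sys N y p x)"
      using i1 i2 by blast
  qed
qed

lemma uu_bounds:
  fixes u :: real
  assumes "0 < u" "u \<le> B"
  shows "u * (u - 1) \<le> B\<^sup>2" "u * (u - 1) \<ge> -1"
proof -
  show "u * (u - 1) \<le> B\<^sup>2"
  proof (cases "u \<ge> 1")
    case True
    then have "u * (u - 1) \<le> B * B" using assms by (intro mult_mono) auto
    then show ?thesis by (simp add: power2_eq_square)
  next
    case False
    then have "u * (u - 1) \<le> 0" using assms by (simp add: mult_nonneg_nonpos)
    then show ?thesis by (smt (verit) zero_le_power2)
  qed
  have "0 \<le> (u - 1/2)\<^sup>2" by simp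
  then show "u * (u - 1) \<ge> -1" by (simp add: power2_eq_square algebra_simps)
qed

lemma pos_case:
  assumes sol: "pos_sol N \<Psi> ell" and ell: "ell > 0" and N: "N \<ge> 2" and l0: "ell \<le> l0"
    and agr: "\<forall>\<xi>>l0. \<Psi> \<xi> = \<phi> \<xi>"
    and B: "\<And>x. x > ell \<Longrightarrow> \<Psi> x \<le> B"
    and inf: "\<And>l' \<psi>'. l' > 0 \<Longrightarrow> pos_sol N \<psi>' l' \<Longrightarrow> (\<forall>\<xi>>max l' l0. \<psi>' \<xi> = \<phi> \<xi>) \<Longrightarrow> ell \<le> l'"
  shows "(\<Psi> \<longlongrightarrow> 0) (at_right ell)"
proof -
  have pos: "\<Psi> x > 0" and sx: "sys N \<Psi> (deriv \<Psi>) x" if "x > ell" for x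
    using pos_sol_sys[OF sol that] by auto
  have B0: "B \<ge> 0" using B[of "ell+1"] pos[of "ell+1"] by simp
  define C where "C = CB N B"
  have C0: "C \<ge> 0" unfolding C_def CB_def using B0 N by simp
  define A where "A = \<bar>Fm N \<Psi> (ell+1)\<bar> + C * (ell+1)^(N+2) / real (N+2)"
  define B1 where "B1 = A / ell^(N+1) + (ell + 1) * (B\<^sup>2 + 1) / 2"
  have dB: "\<bar>deriv \<Psi> x\<bar> \<le> B1" if x: "ell < x" "x \<le> ell + 1" for x
  proof -
    have x0: "x > 0" using x ell by simp
    have f1: "Fm N \<Psi> (ell+1) \<le> Fm N \<Psi> x" using F_mono[OF sol _ N x(1) x(2)] ell by simp
    have "Fm N \<Psi> x + C * x^(N+2) / real (N+2) \<le> Fm N \<Psi> (ell+1) + C * (ell+1)^(N+2) / real (N+2)"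
      unfolding C_def using H_mono[OF sol _ N x(1) x(2), of B] B ell by simp
    moreover have "C * x^(N+2) / real (N+2) \<ge> 0" using C0 x0 by simp
    ultimately have "\<bar>Fm N \<Psi> x\<bar> \<le> A" unfolding A_def using f1 by (simp add: abs_le_iff; linarith)
    moreover have "ell^(N+1) \<le> x^(N+1)" using x ell by (intro power_mono) auto
    moreover have "ell^(N+1) > 0" using ell by simp
    ultimately have "\<bar>Fm N \<Psi> x\<bar> / x^(N+1) \<le> A / ell^(N+1)"
      by (meson abs_ge_zero frac_le order_trans)
    then have 1: "\<bar>Fm N \<Psi> x / x^(N+1)\<bar> \<le> A / ell^(N+1)" using x0 by (simp add: abs_div)
    have "\<bar>\<Psi> x * (\<Psi> x - 1)\<bar> \<le> B\<^sup>2 + 1"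
      using uu_bounds[OF pos[OF x(1)] B[OF x(1)]] zero_le_power2[of B] unfolding abs_le_iff by linarith
    then have "x * \<bar>\<Psi> x * (\<Psi> x - 1)\<bar> \<le> (ell + 1) * (B\<^sup>2 + 1)"
      using x x0 by (intro mult_mono) auto
    moreover have "\<bar>x * \<Psi> x * (\<Psi> x - 1) / 2\<bar> = x * \<bar>\<Psi> x * (\<Psi> x - 1)\<bar> / 2" using x0 by (simp add: abs_mult mult.assoc)
    ultimately have 2: "\<bar>x * \<Psi> x * (\<Psi> x - 1) / 2\<bar> \<le> (ell + 1) * (B\<^sup>2 + 1) / 2" by simp
    have "\<bar>deriv \<Psi> x\<bar> \<le> \<bar>Fm N \<Psi> x / x^(N+1)\<bar> + \<bar>x * \<Psi> x * (\<Psi> x - 1) / 2\<bar>"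
      unfolding deriv_F[OF x0, where u=\<Psi> and N=N] by (rule abs_triangle_ineq4)
    then show ?thesis unfolding B1_def using 1 2 by linarith
  qed
  define Bb where "Bb = max B B1"
  obtain r where r: "r > 0" and rP: "\<And>\<rho> \<xi>0 Y0 P0. 0 < \<rho> \<Longrightarrow> \<rho> \<le> r \<Longrightarrow> ell/2 + \<rho> \<le> \<xi>0 \<Longrightarrow> \<xi>0 + \<rho> \<le> ell + 2
      \<Longrightarrow> \<bar>Y0\<bar> \<le> Bb \<Longrightarrow> \<bar>P0\<bar> \<le> Bb \<Longrightarrow> (\<exists>y p. y \<xi>0 = Y0 \<and> p \<xi>0 = P0 \<and> (\<forall>x\<in>{\<xi>0-\<rho><..<\<xi>0+\<rho>}. sys N y p x))"
    using picard[where cc="ell/2" and N=N and X="ell+2" and B=Bb] ell by auto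
  define \<rho> where "\<rho> = min r (min (ell/2) (1/2))"
  have \<rho>: "0 < \<rho>" "\<rho> \<le> r" "\<rho> \<le> ell/2" "\<rho> \<le> 1/2" unfolding \<rho>_def using r ell by auto
  define \<xi>0 where "\<xi>0 = ell + \<rho>/2"
  have \<xi>0: "ell < \<xi>0" "\<xi>0 \<le> ell + 1" "ell/2 + \<rho> \<le> \<xi>0" "\<xi>0 + \<rho> \<le> ell + 2" "\<xi>0 - \<rho> < ell"
    unfolding \<xi>0_def using \<rho> by auto
  obtain y p where y0: "y \<xi>0 = \<Psi> \<xi>0" "p \<xi>0 = deriv \<Psi> \<xi>0"
    and ys: "\<And>x. x \<in> {\<xi>0-\<rho><..<\<xi>0+\<rho>} \<Longrightarrow> sys N y p x"
  proof -
    have "\<bar>\<Psi> \<xi>0\<bar> \<le> Bb" using B[OF \<xi>0(1)] pos[OF \<xi>0(1)] unfolding Bb_def by simp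
    moreover have "\<bar>deriv \<Psi> \<xi>0\<bar> \<le> Bb" using dB[OF \<xi>0(1,2)] unfolding Bb_def by simp
    ultimately show ?thesis using rP[OF \<rho>(1,2) \<xi>0(3,4)] that by blast
  qed
  have agree: "y x = \<Psi> x \<and> p x = deriv \<Psi> x" if x: "x \<in> {ell<..<\<xi>0+\<rho>}" for x
    apply (rule uniq_int[where I="{ell<..<\<xi>0+\<rho>}" and t="\<xi>0" and N=N and ya=y and yb=\<Psi> and pa=p and pb="deriv \<Psi>"])
    using x ell \<xi>0 \<rho> y0 ys sx iv_Ioo by auto
  have yc: "isCont y ell"
    using ys[of ell] \<xi>0 \<rho> unfolding sys_def by (auto intro: DERIV_isCont)
  have limy: "(\<Psi> \<longlongrightarrow> y ell) (at_right ell)"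
  proof -
    have "(y \<longlongrightarrow> y ell) (at_right ell)" using yc by (simp add: isCont_def filterlim_at_split)
    moreover have "eventually (\<lambda>x. y x = \<Psi> x) (at_right ell)"
      unfolding eventually_at_right_field
      by (rule exI[of _ "\<xi>0 + \<rho>"]) (use agree \<xi>0 \<rho> in auto)
    ultimately show ?thesis by (rule Lim_transform_eventually)
  qed
  show ?thesis
  proof (cases "y ell = 0")
    case True
    then show ?thesis using limy by simp
  next
    case False
    have "y ell \<ge> 0"
    proof (rule tendsto_lowerbound[OF limy])
      show "eventually (\<lambda>x. 0 \<le> \<Psi> x) (at_right ell)"
        unfolding eventually_at_right_field by (rule exI[of _ "ell+1"]) (use pos in \<open>auto intro: less_imp_le\<close>)
    qed simp
    then have ypos: "y ell > 0" using False by simp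
    have "eventually (\<lambda>x. y x > 0) (at ell)"
      using yc ypos by (simp add: isCont_def order_tendstoD(1))
    then obtain \<delta> where \<delta>: "\<delta> > 0" "\<And>x. x \<noteq> ell \<Longrightarrow> dist x ell < \<delta> \<Longrightarrow> y x > 0"
      unfolding eventually_at by auto
    define \<delta>' where "\<delta>' = min \<delta> (\<rho>/4)"
    have \<delta>': "\<delta>' > 0" "\<delta>' \<le> \<delta>" "\<delta>' \<le> \<rho>/4" unfolding \<delta>'_def using \<delta> \<rho> by auto
    define l' where "l' = ell - \<delta>'"
    have l': "l' > 0" "l' < ell" "\<xi>0 - \<rho> < l'" unfolding l'_def \<xi>0_def using \<delta>' \<rho> by auto
    define \<Phi> where "\<Phi> x = (if x < \<xi>0 then y x else \<Psi> x)" for x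
    have PhiPsi: "\<Phi> z = \<Psi> z" if "z > ell" for z
      unfolding \<Phi>_def using agree[of z] that \<xi>0 \<rho> by auto
    have Phiy: "\<Phi> z = y z" if "z \<in> {\<xi>0-\<rho><..<\<xi>0}" for z
      unfolding \<Phi>_def using that by auto
    have "pos_sol N \<Phi> l'"
      unfolding pos_sol_iff
    proof (intro allI impI)
      fix x assume x: "x > l'"
      show "solat N \<Phi> x"
      proof (cases "x > ell")
        case True
        show ?thesis
        proof (rule sys_solat[where S="{ell<..}" and p="deriv \<Psi>"])
          fix z assume z: "z \<in> {ell<..}"
          show "sys N \<Phi> (deriv \<Psi>) z"
            by (rule sys_transfer[OF sx[of z] open_greaterThan z]) (use z PhiPsi in auto)
        qed (use True PhiPsi pos in auto)
      next
        case False
        have xin: "x \<in> {\<xi>0-\<rho><..<\<xi>0}" using False x l' \<xi>0 by auto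
        have "y x > 0"
        proof (cases "x = ell")
          case True then show ?thesis using ypos by simp
        next
          case False
          have "dist x ell < \<delta>" using x \<open>\<not> x > ell\<close> \<delta>' unfolding l'_def dist_real_def by auto
          then show ?thesis using \<delta>(2) False by blast
        qed
        then have Px: "\<Phi> x > 0" using Phiy[OF xin] by simp
        show ?thesis
        proof (rule sys_solat[where S="{\<xi>0-\<rho><..<\<xi>0}" and p=p])
          fix z assume z: "z \<in> {\<xi>0-\<rho><..<\<xi>0}"
          show "sys N \<Phi> p z"
            by (rule sys_transfer[OF ys[of z] open_greaterThanLessThan z]) (use z Phiy in auto)
        qed (use xin Px in auto)
      qed
    qed
    moreover have "\<forall>\<xi>>max l' l0. \<Phi> \<xi> = \<phi> \<xi>"
      using PhiPsi agr l0 l' by auto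
    ultimately have "ell \<le> l'" using inf l' by blast
    then show ?thesis using l' by simp
  qed
qed

theorem lemma3p4:
  fixes N :: nat and m l0 :: real and \<phi> :: "real \<Rightarrow> real"
  assumes "N \<ge> 3" and "m > 0" and "l0 > 0"
    and "pos_sol N \<phi> l0"
    and "((\<lambda>\<xi>. \<phi> \<xi> * \<xi>\<^sup>2) \<longlongrightarrow> m) at_top"
  shows "\<exists>\<psi>. pos_sol N \<psi> (ext_inf N \<phi> l0) \<and> (\<forall>\<xi>>l0. \<psi> \<xi> = \<phi> \<xi>) \<and>
    (let ell = ext_inf N \<phi> l0;
         C1 = (\<not> bounded (\<psi> ` {ell<..}) \<and> filterlim \<psi> at_top (at_right ell));
         C2 = (bounded (\<psi> ` {ell<..}) \<and> ell > 0 \<and> (\<psi> \<longlongrightarrow> 0) (at_right ell));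
         C3 = (bounded (\<psi> ` {ell<..}) \<and> ell = 0 \<and> (\<exists>L. (\<psi> \<longlongrightarrow> L) (at_right 0))
               \<and> (deriv \<psi> \<longlongrightarrow> 0) (at_right 0))
     in (C1 \<and> \<not> C2 \<and> \<not> C3) \<or> (\<not> C1 \<and> C2 \<and> \<not> C3) \<or> (\<not> C1 \<and> \<not> C2 \<and> C3))"
proof -
  note N3 = assms(1) and l0 = assms(3) and sol0 = assms(4) and lim = assms(5)
  have N: "N \<ge> 2" using N3 by simp
  define S where "S = {l. l > 0 \<and> (\<exists>\<psi>. pos_sol N \<psi> l \<and> (\<forall>\<xi>>max l l0. \<psi> \<xi> = \<phi> \<xi>))}"
  note g = glue[OF l0 sol0]
  define ell where "ell = ext_inf N \<phi> l0"
  have ellS: "ell = Inf S" using g(1) unfolding ell_def S_def .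
  have l0S: "l0 \<in> S" using g(2) unfolding S_def .
  have bdd: "bdd_below S" using g(3) unfolding S_def .
  have ell0: "ell \<ge> 0" using g(4) unfolding ellS S_def .
  have elll0: "ell \<le> l0" using g(5) unfolding ellS S_def .
  obtain \<Psi> where sol: "pos_sol N \<Psi> ell" and agr: "\<forall>\<xi>>l0. \<Psi> \<xi> = \<phi> \<xi>"
    using g(6) unfolding ellS S_def by blast
  have inf: "ell \<le> l'" if "l' > 0" "pos_sol N \<psi>' l'" "\<forall>\<xi>>max l' l0. \<psi>' \<xi> = \<phi> \<xi>" for l' \<psi>'
  proof -
    have "l' \<in> S" unfolding S_def using that by blast
    then show ?thesis unfolding ellS using bdd by (rule cInf_lower)
  qed
  have pos: "\<Psi> x > 0" and sx: "sys N \<Psi> (deriv \<Psi>) x" if "x > ell" for x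
    using pos_sol_sys[OF sol that] by auto
  have bt: "\<exists>K. \<forall>x\<ge>b. \<Psi> x \<le> K" if b: "b > ell" for b
  proof -
    have "eventually (\<lambda>\<xi>. \<phi> \<xi> * \<xi>\<^sup>2 < m + 1) at_top"
      using lim by (rule order_tendstoD) simp
    then obtain X0 where X0: "\<And>x. x \<ge> X0 \<Longrightarrow> \<phi> x * x\<^sup>2 < m + 1"
      unfolding eventually_at_top_linorder by blast
    define X1 where "X1 = max X0 (max l0 (max b 1)) + 1"
    have big: "\<Psi> x \<le> m + 1" if x: "x \<ge> X1" for x
    proof -
      have xl: "x > l0" "x \<ge> X0" "x \<ge> 1" "x > ell" using x elll0 unfolding X1_def by auto
      have "1 \<le> x\<^sup>2" using xl(3) by (simp add: one_le_power)
      then have "\<Psi> x * 1 \<le> \<Psi> x * x\<^sup>2" using pos[OF xl(4)] by (intro mult_left_mono) auto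
      then show ?thesis using X0[OF xl(2)] agr xl(1) by simp
    qed
    have "continuous_on {b..X1} \<Psi>"
      by (rule deriv_cont_on[where g="deriv \<Psi>"]) (use sx b in \<open>auto simp: sys_def\<close>)
    then obtain K2 where K2: "\<And>x. x \<in> {b..X1} \<Longrightarrow> \<bar>\<Psi> x\<bar> \<le> K2" using bounded_cont_Icc by metis
    show ?thesis
    proof (intro exI[of _ "max (m+1) K2"] allI impI)
      fix x assume "x \<ge> b"
      then show "\<Psi> x \<le> max (m+1) K2"
        using big[of x] K2[of x] by (cases "x \<ge> X1") (auto simp: not_le)
    qed
  qed
  define C1 where "C1 = (\<not> bounded (\<Psi> ` {ell<..}) \<and> filterlim \<Psi> at_top (at_right ell))"
  define C2 where "C2 = (bounded (\<Psi> ` {ell<..}) \<and> ell > 0 \<and> (\<Psi> \<longlongrightarrow> 0) (at_right ell))"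
  define C3 where "C3 = (bounded (\<Psi> ` {ell<..}) \<and> ell = 0 \<and> (\<exists>L. (\<Psi> \<longlongrightarrow> L) (at_right 0))
               \<and> (deriv \<Psi> \<longlongrightarrow> 0) (at_right 0))"
  have main: "(C1 \<and> \<not> C2 \<and> \<not> C3) \<or> (\<not> C1 \<and> C2 \<and> \<not> C3) \<or> (\<not> C1 \<and> \<not> C2 \<and> C3)"
  proof (cases "bounded (\<Psi> ` {ell<..})")
    case False
    have "filterlim \<Psi> at_top (at_right ell)" by (rule unbdd_case[OF sol ell0 N False bt])
    then show ?thesis unfolding C1_def C2_def C3_def using False by blast
  next
    case True
    then obtain B where B0: "\<forall>z\<in>\<Psi> ` {ell<..}. norm z \<le> B" unfolding bounded_iff by blast
    have B: "\<Psi> x \<le> B" if "x > ell" for x using B0 that by (force simp: abs_le_iff)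
    show ?thesis
    proof (cases "ell > 0")
      case True
      have "(\<Psi> \<longlongrightarrow> 0) (at_right ell)"
        by (rule pos_case[OF sol True N elll0 agr B inf]) auto
      then show ?thesis unfolding C1_def C2_def C3_def using \<open>bounded _\<close> True by auto
    next
      case False
      then have e0: "ell = 0" using ell0 by simp
      have "(\<exists>L. (\<Psi> \<longlongrightarrow> L) (at_right 0)) \<and> (deriv \<Psi> \<longlongrightarrow> 0) (at_right 0)"
        by (rule zero_case[OF sol[unfolded e0] N]) (use B e0 in auto)
      then show ?thesis unfolding C1_def C2_def C3_def using \<open>bounded _\<close> e0 by auto
    qed
  qed
  show ?thesis
    unfolding Let_def ell_def[symmetric]
    using sol agr main unfolding C1_def C2_def C3_def by blast
qed

end
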